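(* Let $n,d$ be positive integers and let $T=(T_1,\ldots,T_d)$ be a commuting contractive operator-valued multishift on $\ell^2_{\mathbb C^n}(\mathbb N^d)$ whose operator weights are invertible $n\times n$ diagonal matrices. Then $T$ satisfies the von Neumann's inequality, i.e. $\|p(T)\|\le\sup_{z\in\mathbb D^d}|p(z)|$ for every polynomial $p\in\mathbb C[z_1,\ldots,z_d]$.
   Context: $\mathbb N$ denotes the nonnegative integers; $\varepsilon_j\in\mathbb N^d$ has $1$ in the $j$-th place and $0$ elsewhere; $\mathbb D^d$ is the open unit polydisc. $\ell^2_{H}(\mathbb N^d)=\bigoplus_{\alpha\in\mathbb N^d}H$. Given bounded operators $A^{(j)}_\alpha:H\to H$ ($\alpha\in\mathbb N^d$, $j=1,\ldots,d$), the operator-valued multishift with these operator weights is the $d$-tuple defined by $T_j(\oplus_\alpha x_\alpha)=\oplus_\alpha A^{(j)}_{\alpha-\varepsilon_j}x_{\alpha-\varepsilon_j}$ (the term being $0$ when $\alpha_j=0$). It is a commuting operator-valued multishift if $\sup_\alpha\|A^{(j)}_\alpha\|<\infty$ for each $j$ and $A^{(i)}_{\alpha+\varepsilon_j}A^{(j)}_\alpha=A^{(j)}_{\alpha+\varepsilon_i}A^{(i)}_\alpha$ for all $\alpha$ and all $i,j$. It is contractive if each $T_j$ has norm at most $1$. For $p(z)=\sum a_\alpha z^\alpha$, $p(T)=\sum a_\alpha T_1^{\alpha_1}\cdots T_d^{\alpha_d}$. *)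

theory Defs
  imports "HOL-Analysis.Analysis"
begin

definition add_unit :: "('d \<Rightarrow> nat) \<Rightarrow> 'd \<Rightarrow> ('d \<Rightarrow> nat)" where
  "add_unit \<alpha> j = \<alpha>(j := Suc (\<alpha> j))"

definition in_l2 :: "(('d \<Rightarrow> nat) \<Rightarrow> complex^'n) \<Rightarrow> bool" where
  "in_l2 x \<longleftrightarrow> (\<lambda>\<alpha>. (norm (x \<alpha>))\<^sup>2) summable_on UNIV"

definition l2norm :: "(('d \<Rightarrow> nat) \<Rightarrow> complex^'n) \<Rightarrow> real" where
  "l2norm x = sqrt (\<Sum>\<^sub>\<infinity>\<alpha>. (norm (x \<alpha>))\<^sup>2)"

definition mshift ::
  "('d \<Rightarrow> ('d \<Rightarrow> nat) \<Rightarrow> complex^'n^'n) \<Rightarrow> 'd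
    \<Rightarrow> (('d \<Rightarrow> nat) \<Rightarrow> complex^'n) \<Rightarrow> (('d \<Rightarrow> nat) \<Rightarrow> complex^'n)" where
  "mshift A j x = (\<lambda>\<alpha>. if \<alpha> j = 0 then 0
       else A j (\<alpha>(j := \<alpha> j - 1)) *v x (\<alpha>(j := \<alpha> j - 1)))"

definition is_diag_matrix :: "complex^'n^'n \<Rightarrow> bool" where
  "is_diag_matrix M \<longleftrightarrow> (\<forall>k l. k \<noteq> l \<longrightarrow> M $ k $ l = 0)"

definition commuting_multishift_weights :: "('d \<Rightarrow> ('d \<Rightarrow> nat) \<Rightarrow> complex^'n^'n) \<Rightarrow> bool" where
  "commuting_multishift_weights A \<longleftrightarrow>
     (\<forall>j. \<exists>M. \<forall>\<alpha>. onorm (\<lambda>v. A j \<alpha> *v v) \<le> M) \<and>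
     (\<forall>\<alpha> i j. A i (add_unit \<alpha> j) ** A j \<alpha> = A j (add_unit \<alpha> i) ** A i \<alpha>)"

definition contractive_multishift :: "('d \<Rightarrow> ('d \<Rightarrow> nat) \<Rightarrow> complex^'n^'n) \<Rightarrow> bool" where
  "contractive_multishift A \<longleftrightarrow>
     (\<forall>j x. in_l2 x \<longrightarrow> in_l2 (mshift A j x) \<and> l2norm (mshift A j x) \<le> l2norm x)"

definition mshift_pow ::
  "('d::{finite,linorder} \<Rightarrow> ('d \<Rightarrow> nat) \<Rightarrow> complex^'n^'n) \<Rightarrow> ('d \<Rightarrow> nat)
    \<Rightarrow> (('d \<Rightarrow> nat) \<Rightarrow> complex^'n) \<Rightarrow> (('d \<Rightarrow> nat) \<Rightarrow> complex^'n)" where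
  "mshift_pow A \<beta> = foldr (\<lambda>j f. (mshift A j ^^ \<beta> j) \<circ> f) (sorted_list_of_set UNIV) id"

definition is_poly_coeffs :: "(('d \<Rightarrow> nat) \<Rightarrow> complex) \<Rightarrow> bool" where
  "is_poly_coeffs a \<longleftrightarrow> finite {\<beta>. a \<beta> \<noteq> 0}"

definition poly_eval :: "(('d::finite \<Rightarrow> nat) \<Rightarrow> complex) \<Rightarrow> ('d \<Rightarrow> complex) \<Rightarrow> complex" where
  "poly_eval a z = (\<Sum>\<beta>\<in>{\<beta>. a \<beta> \<noteq> 0}. a \<beta> * (\<Prod>j\<in>UNIV. z j ^ \<beta> j))"

definition poly_of_mshift ::
  "(('d::{finite,linorder} \<Rightarrow> nat) \<Rightarrow> complex) \<Rightarrow> ('d \<Rightarrow> ('d \<Rightarrow> nat) \<Rightarrow> complex^'n^'n)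
    \<Rightarrow> (('d \<Rightarrow> nat) \<Rightarrow> complex^'n) \<Rightarrow> (('d \<Rightarrow> nat) \<Rightarrow> complex^'n)" where
  "poly_of_mshift a A x = (\<lambda>\<gamma>. \<Sum>\<beta>\<in>{\<beta>. a \<beta> \<noteq> 0}. a \<beta> *s mshift_pow A \<beta> x \<gamma>)"

definition polydisc :: "('d \<Rightarrow> complex) set" where
  "polydisc = {z. \<forall>j. norm (z j) < 1}"

end

theory Submission
  imports Defs
begin


definition shb :: "('d \<Rightarrow> nat) \<Rightarrow> (('d \<Rightarrow> nat) \<Rightarrow> complex) \<Rightarrow> (('d \<Rightarrow> nat) \<Rightarrow> complex)" where
  "shb \<beta> g = (\<lambda>\<gamma>. if \<beta> \<le> \<gamma> then g (\<lambda>i. \<gamma> i - \<beta> i) else 0)"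

definition conv :: "(('d \<Rightarrow> nat) \<Rightarrow> complex) \<Rightarrow> (('d \<Rightarrow> nat) \<Rightarrow> complex) \<Rightarrow> (('d \<Rightarrow> nat) \<Rightarrow> complex)" where
  "conv a y = (\<lambda>\<gamma>. \<Sum>\<beta>\<in>{\<beta>. a \<beta> \<noteq> 0}. a \<beta> * shb \<beta> y \<gamma>)"

definition mon :: "('d::finite \<Rightarrow> complex) \<Rightarrow> ('d \<Rightarrow> nat) \<Rightarrow> complex" where
  "mon \<omega> \<gamma> = (\<Prod>j\<in>UNIV. \<omega> j ^ \<gamma> j)"

lemma pe_superset:
  assumes "finite A" "{\<gamma>. q \<gamma> \<noteq> 0} \<subseteq> A"
  shows "poly_eval q \<omega> = (\<Sum>\<gamma>\<in>A. q \<gamma> * mon \<omega> \<gamma>)"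
  unfolding poly_eval_def mon_def
  by (rule sum.mono_neutral_left) (use assms in auto)

lemma mon_add: "mon \<omega> (\<lambda>j. \<beta> j + \<alpha> j) = mon \<omega> \<beta> * mon \<omega> \<alpha>"
  unfolding mon_def by (simp add: power_add prod.distrib)

lemma pe_conv:
  fixes a z :: "('d::finite \<Rightarrow> nat) \<Rightarrow> complex"
  assumes fa: "finite {\<beta>. a \<beta> \<noteq> 0}" and fz: "finite {\<alpha>. z \<alpha> \<noteq> 0}"
  shows "poly_eval (conv a z) \<omega> = poly_eval a \<omega> * poly_eval z \<omega>"
proof -
  define Sa where "Sa = {\<beta>. a \<beta> \<noteq> 0}"
  define Sz where "Sz = {\<alpha>. z \<alpha> \<noteq> 0}"
  define A where "A = (\<lambda>(\<beta>,\<alpha>). (\<lambda>j. \<beta> j + \<alpha> j)) ` (Sa \<times> Sz)"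
  have fA: "finite A" unfolding A_def using fa fz Sa_def Sz_def by auto
  have suppc: "{\<gamma>. conv a z \<gamma> \<noteq> 0} \<subseteq> A"
  proof
    fix \<gamma> assume "\<gamma> \<in> {\<gamma>. conv a z \<gamma> \<noteq> 0}"
    then have "(\<Sum>\<beta>\<in>Sa. a \<beta> * shb \<beta> z \<gamma>) \<noteq> 0" by (simp add: conv_def Sa_def)
    then obtain \<beta> where b: "\<beta> \<in> Sa" "a \<beta> * shb \<beta> z \<gamma> \<noteq> 0"
      by (meson sum.not_neutral_contains_not_neutral)
    then have le: "\<beta> \<le> \<gamma>" and nz: "z (\<lambda>i. \<gamma> i - \<beta> i) \<noteq> 0"
      by (auto simp: shb_def split: if_splits)
    have "\<gamma> = (\<lambda>j. \<beta> j + (\<lambda>i. \<gamma> i - \<beta> i) j)" using le by (auto simp: le_fun_def)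
    moreover have "(\<beta>, (\<lambda>i. \<gamma> i - \<beta> i)) \<in> Sa \<times> Sz" using b nz Sz_def by auto
    ultimately show "\<gamma> \<in> A" unfolding A_def
      by (intro rev_image_eqI[where x="(\<beta>, \<lambda>i. \<gamma> i - \<beta> i)"]) auto
  qed
  have inner: "(\<Sum>\<gamma>\<in>A. shb \<beta> z \<gamma> * mon \<omega> \<gamma>) = (\<Sum>\<alpha>\<in>Sz. z \<alpha> * mon \<omega> (\<lambda>j. \<beta> j + \<alpha> j))"
    if "\<beta> \<in> Sa" for \<beta>
  proof -
    have inj: "inj_on (\<lambda>\<alpha>. (\<lambda>j. \<beta> j + \<alpha> j)) Sz"
      by (auto simp: inj_on_def fun_eq_iff)
    have "(\<Sum>\<alpha>\<in>Sz. z \<alpha> * mon \<omega> (\<lambda>j. \<beta> j + \<alpha> j))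
        = (\<Sum>\<alpha>\<in>Sz. shb \<beta> z (\<lambda>j. \<beta> j + \<alpha> j) * mon \<omega> (\<lambda>j. \<beta> j + \<alpha> j))"
      by (simp add: shb_def le_fun_def)
    also have "\<dots> = (\<Sum>\<gamma>\<in>(\<lambda>\<alpha>. (\<lambda>j. \<beta> j + \<alpha> j)) ` Sz. shb \<beta> z \<gamma> * mon \<omega> \<gamma>)"
      by (simp add: sum.reindex[OF inj])
    also have "\<dots> = (\<Sum>\<gamma>\<in>A. shb \<beta> z \<gamma> * mon \<omega> \<gamma>)"
    proof (rule sum.mono_neutral_left[OF fA])
      show "(\<lambda>\<alpha>. (\<lambda>j. \<beta> j + \<alpha> j)) ` Sz \<subseteq> A" using that unfolding A_def by auto
      show "\<forall>i\<in>A - (\<lambda>\<alpha>. (\<lambda>j. \<beta> j + \<alpha> j)) ` Sz. shb \<beta> z i * mon \<omega> i = 0"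
      proof
        fix \<gamma> assume g: "\<gamma> \<in> A - (\<lambda>\<alpha>. (\<lambda>j. \<beta> j + \<alpha> j)) ` Sz"
        show "shb \<beta> z \<gamma> * mon \<omega> \<gamma> = 0"
        proof (cases "\<beta> \<le> \<gamma> \<and> z (\<lambda>i. \<gamma> i - \<beta> i) \<noteq> 0")
          case True
          then have "\<gamma> = (\<lambda>j. \<beta> j + (\<lambda>i. \<gamma> i - \<beta> i) j)" by (auto simp: le_fun_def)
          moreover have "(\<lambda>i. \<gamma> i - \<beta> i) \<in> Sz" using True Sz_def by auto
          ultimately have "\<gamma> \<in> (\<lambda>\<alpha>. (\<lambda>j. \<beta> j + \<alpha> j)) ` Sz"
            by (intro rev_image_eqI[where x="\<lambda>i. \<gamma> i - \<beta> i"]) auto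
          then show ?thesis using g by blast
        qed (auto simp: shb_def)
      qed
    qed
    finally show ?thesis by simp
  qed
  have "poly_eval (conv a z) \<omega> = (\<Sum>\<gamma>\<in>A. conv a z \<gamma> * mon \<omega> \<gamma>)"
    by (rule pe_superset[OF fA suppc])
  also have "\<dots> = (\<Sum>\<gamma>\<in>A. \<Sum>\<beta>\<in>Sa. a \<beta> * (shb \<beta> z \<gamma> * mon \<omega> \<gamma>))"
    by (simp add: conv_def Sa_def sum_distrib_right mult.assoc)
  also have "\<dots> = (\<Sum>\<beta>\<in>Sa. a \<beta> * (\<Sum>\<gamma>\<in>A. shb \<beta> z \<gamma> * mon \<omega> \<gamma>))"
    by (subst sum.swap) (simp add: sum_distrib_left)
  also have "\<dots> = (\<Sum>\<beta>\<in>Sa. a \<beta> * (\<Sum>\<alpha>\<in>Sz. z \<alpha> * mon \<omega> (\<lambda>j. \<beta> j + \<alpha> j)))"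
    by (rule sum.cong) (auto simp: inner)
  also have "\<dots> = (\<Sum>\<beta>\<in>Sa. a \<beta> * mon \<omega> \<beta>) * (\<Sum>\<alpha>\<in>Sz. z \<alpha> * mon \<omega> \<alpha>)"
    by (simp add: mon_add sum_distrib_left sum_distrib_right mult_ac sum.swap[of _ Sz])
  also have "\<dots> = poly_eval a \<omega> * poly_eval z \<omega>"
    by (simp add: poly_eval_def mon_def Sa_def Sz_def)
  finally show ?thesis .
qed



definition zeta :: "nat \<Rightarrow> complex" where "zeta N = exp (2 * of_real pi * \<i> / of_nat N)"

lemma zeta_cnj: "cnj (zeta N) * zeta N = 1"
proof -
  have "cnj (zeta N) = exp (cnj (2 * of_real pi * \<i> / of_nat N))"
    unfolding zeta_def by (simp only: exp_cnj)
  also have "\<dots> = exp (- (2 * of_real pi * \<i> / of_nat N))" by simp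
  finally show ?thesis unfolding zeta_def by (simp add: exp_minus)
qed

lemma zeta_cnj': "zeta N * cnj (zeta N) = 1"
  using zeta_cnj[of N] by (simp add: mult.commute)

lemma zeta_pow_N: "N > 0 \<Longrightarrow> zeta N ^ N = 1"
proof -
  assume N: "N > 0"
  have "zeta N ^ N = exp (of_nat N * (2 * of_real pi * \<i> / of_nat N))"
    unfolding zeta_def by (simp only: exp_of_nat_mult)
  also have "of_nat N * (2 * of_real pi * \<i> / of_nat N) = 2 * of_real pi * \<i>"
    using N by (simp add: field_simps)
  finally show ?thesis by simp
qed

lemma zeta_pow_ne1: assumes "0 < m" "m < N" shows "zeta N ^ m \<noteq> 1"
proof
  assume h: "zeta N ^ m = 1"
  have "zeta N ^ m = exp (of_nat m * (2 * of_real pi * \<i> / of_nat N))"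
    unfolding zeta_def by (simp only: exp_of_nat_mult)
  with h obtain n :: int where n: "Im (of_nat m * (2 * of_real pi * \<i> / of_nat N)) = of_int (2 * n) * pi"
    by (auto simp: exp_eq_1)
  have "Im (of_nat m * (2 * of_real pi * \<i> / of_nat N)) = 2 * pi * real m / real N"
    by (simp add: Im_divide_of_nat)
  with n have "2 * pi * real m / real N = 2 * real_of_int n * pi" by simp
  then have "real m = real_of_int n * real N" using assms by (simp add: field_simps)
  then have "int m = n * int N" by (metis of_int_eq_iff of_int_mult of_int_of_nat_eq)
  have "0 < n * int N" using assms \<open>int m = n * int N\<close> by simp
  then have "n > 0" by (auto simp: zero_less_mult_iff)
  then have "1 \<le> n" by simp
  then have "n * int N \<ge> int N" using mult_right_mono[of 1 n "int N"] by simp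
  then show False using assms \<open>int m = n * int N\<close> by linarith
qed

lemma sum_roots:
  assumes N: "N > 0" and g: "g < N" "g' < N"
  shows "(\<Sum>m<N. (zeta N ^ g * cnj (zeta N) ^ g') ^ m) = (if g = g' then of_nat N else 0)"
proof (cases "g = g'")
  case True
  then have "zeta N ^ g * cnj (zeta N) ^ g' = 1"
    by (metis power_mult_distrib zeta_cnj mult.commute power_one)
  then show ?thesis using True by simp
next
  case False
  define u where "u = zeta N ^ g * cnj (zeta N) ^ g'"
  have "u ^ N = (zeta N ^ N) ^ g * cnj (zeta N ^ N) ^ g'"
  proof -
    have 1: "(zeta N ^ g) ^ N = (zeta N ^ N) ^ g" by (simp add: power_mult[symmetric] mult.commute)
    have 2: "(cnj (zeta N) ^ g') ^ N = cnj (zeta N ^ N) ^ g'"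
      by (simp add: power_mult[symmetric] mult.commute complex_cnj_power)
    show ?thesis unfolding u_def power_mult_distrib 1 2 ..
  qed
  then have uN: "u ^ N = 1" using zeta_pow_N[OF N] by simp
  have "u \<noteq> 1"
  proof (cases "g' < g")
    case True
    have "u = zeta N ^ (g - g') * (zeta N * cnj (zeta N)) ^ g'"
      unfolding u_def power_mult_distrib using True
      by (metis (no_types, lifting) le_add_diff_inverse2 less_or_eq_imp_le mult.assoc power_add)
    also have "\<dots> = zeta N ^ (g - g')" by (simp add: zeta_cnj')
    finally show ?thesis using zeta_pow_ne1[of "g - g'" N] True g by auto
  next
    case False
    with \<open>g \<noteq> g'\<close> have lt: "g < g'" by simp
    have "u = (zeta N * cnj (zeta N)) ^ g * cnj (zeta N) ^ (g' - g)"
      unfolding u_def power_mult_distrib using lt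
      by (metis (no_types, lifting) le_add_diff_inverse less_or_eq_imp_le mult.assoc power_add)
    also have "\<dots> = cnj (zeta N ^ (g' - g))" by (simp add: zeta_cnj')
    finally show ?thesis using zeta_pow_ne1[of "g' - g" N] lt g
      by (metis complex_cnj_one_iff zero_less_diff less_imp_diff_less)
  qed
  then have "(\<Sum>m<N. u ^ m) = 0" using uN by (simp add: geometric_sum)
  then show ?thesis using False u_def by simp
qed

definition boxN :: "nat \<Rightarrow> ('d \<Rightarrow> nat) set" where "boxN N = {k. \<forall>j. k j < N}"

lemma boxN_PiE: "boxN N = PiE UNIV (\<lambda>_. {..<N})"
  by (auto simp: boxN_def PiE_UNIV_domain)

lemma finite_boxN: "finite (boxN N :: ('d::finite \<Rightarrow> nat) set)"
  unfolding boxN_PiE by (rule finite_PiE) auto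

definition om :: "nat \<Rightarrow> ('d \<Rightarrow> nat) \<Rightarrow> ('d \<Rightarrow> complex)" where
  "om N k = (\<lambda>j. zeta N ^ k j)"

lemma char_sum:
  fixes \<gamma> \<gamma>' :: "'d::finite \<Rightarrow> nat"
  assumes N: "N > 0" and g: "\<gamma> \<in> boxN N" "\<gamma>' \<in> boxN N"
  shows "(\<Sum>k\<in>boxN N. mon (om N k) \<gamma> * cnj (mon (om N k) \<gamma>'))
          = (if \<gamma> = \<gamma>' then of_nat N ^ CARD('d) else 0)"
proof -
  define u where "u j = zeta N ^ \<gamma> j * cnj (zeta N) ^ \<gamma>' j" for j
  have trm: "mon (om N k) \<gamma> * cnj (mon (om N k) \<gamma>') = (\<Prod>j\<in>UNIV. u j ^ k j)" for k
  proof -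
    have "mon (om N k) \<gamma> * cnj (mon (om N k) \<gamma>')
        = (\<Prod>j\<in>UNIV. (zeta N ^ k j) ^ \<gamma> j * cnj ((zeta N ^ k j) ^ \<gamma>' j))"
      by (simp add: mon_def om_def prod.distrib)
    also have "\<dots> = (\<Prod>j\<in>UNIV. u j ^ k j)"
      by (rule prod.cong) (simp_all add: u_def power_mult_distrib complex_cnj_power
          flip: power_mult add: mult.commute)
    finally show ?thesis .
  qed
  have "(\<Sum>k\<in>boxN N. mon (om N k) \<gamma> * cnj (mon (om N k) \<gamma>'))
       = (\<Sum>k\<in>PiE UNIV (\<lambda>_. {..<N}). \<Prod>j\<in>UNIV. u j ^ k j)"
    by (simp add: trm boxN_PiE)
  also have "\<dots> = (\<Prod>j\<in>UNIV. \<Sum>m<N. u j ^ m)"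
    by (rule prod_sum_PiE[symmetric]) auto
  also have "\<dots> = (\<Prod>j\<in>UNIV. if \<gamma> j = \<gamma>' j then of_nat N else 0)"
    using g by (intro prod.cong refl) (simp add: u_def sum_roots[OF N] boxN_def)
  also have "\<dots> = (if \<gamma> = \<gamma>' then of_nat N ^ CARD('d) else 0)"
  proof (cases "\<gamma> = \<gamma>'")
    case False
    then obtain j where "\<gamma> j \<noteq> \<gamma>' j" by (auto simp: fun_eq_iff)
    then show ?thesis using False by (intro trans[OF prod_zero]) auto
  qed simp
  finally show ?thesis .
qed

lemma sum_if_eq:
  fixes f :: "'a \<Rightarrow> 'b::comm_ring_1"
  assumes "finite B" "x \<in> B"
  shows "(\<Sum>y\<in>B. f y * (if x = y then c else 0)) = f x * c"
proof -
  have "(\<Sum>y\<in>B. f y * (if x = y then c else 0)) = (\<Sum>y\<in>B. if x = y then f y * c else 0)"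
    by (rule sum.cong) auto
  then show ?thesis using assms by simp
qed

lemma parseval:
  fixes q :: "('d::finite \<Rightarrow> nat) \<Rightarrow> complex"
  assumes N: "N > 0" and supp: "{\<gamma>. q \<gamma> \<noteq> 0} \<subseteq> boxN N"
  shows "(\<Sum>k\<in>boxN N. (cmod (poly_eval q (om N k)))\<^sup>2)
         = real N ^ CARD('d) * (\<Sum>\<gamma>\<in>boxN N. (cmod (q \<gamma>))\<^sup>2)"
proof -
  let ?B = "boxN N :: ('d \<Rightarrow> nat) set"
  have fB: "finite ?B" by (rule finite_boxN)
  have "complex_of_real (\<Sum>k\<in>?B. (cmod (poly_eval q (om N k)))\<^sup>2)
      = (\<Sum>k\<in>?B. poly_eval q (om N k) * cnj (poly_eval q (om N k)))"
    by (simp only: of_real_sum complex_norm_square)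
  also have "\<dots> = (\<Sum>k\<in>?B. (\<Sum>\<gamma>\<in>?B. q \<gamma> * mon (om N k) \<gamma>) * (\<Sum>\<gamma>'\<in>?B. cnj (q \<gamma>') * cnj (mon (om N k) \<gamma>')))"
    by (simp add: pe_superset[OF fB supp])
  also have "\<dots> = (\<Sum>k\<in>?B. \<Sum>\<gamma>\<in>?B. \<Sum>\<gamma>'\<in>?B. q \<gamma> * cnj (q \<gamma>') * (mon (om N k) \<gamma> * cnj (mon (om N k) \<gamma>')))"
    by (rule sum.cong[OF refl]) (simp only: sum_product mult_ac)
  also have "\<dots> = (\<Sum>\<gamma>\<in>?B. \<Sum>k\<in>?B. \<Sum>\<gamma>'\<in>?B. q \<gamma> * cnj (q \<gamma>') * (mon (om N k) \<gamma> * cnj (mon (om N k) \<gamma>')))"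
    by (rule sum.swap)
  also have "\<dots> = (\<Sum>\<gamma>\<in>?B. \<Sum>\<gamma>'\<in>?B. \<Sum>k\<in>?B. q \<gamma> * cnj (q \<gamma>') * (mon (om N k) \<gamma> * cnj (mon (om N k) \<gamma>')))"
    by (rule sum.cong[OF refl]) (rule sum.swap)
  also have "\<dots> = (\<Sum>\<gamma>\<in>?B. \<Sum>\<gamma>'\<in>?B. q \<gamma> * cnj (q \<gamma>') * (\<Sum>k\<in>?B. mon (om N k) \<gamma> * cnj (mon (om N k) \<gamma>')))"
    by (simp only: sum_distrib_left)
  also have "\<dots> = (\<Sum>\<gamma>\<in>?B. \<Sum>\<gamma>'\<in>?B. q \<gamma> * cnj (q \<gamma>') * (if \<gamma> = \<gamma>' then of_nat N ^ CARD('d) else 0))"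
    by (intro sum.cong refl) (simp add: char_sum[OF N])
  also have "\<dots> = (\<Sum>\<gamma>\<in>?B. q \<gamma> * cnj (q \<gamma>) * of_nat N ^ CARD('d))"
    by (rule sum.cong[OF refl]) (rule sum_if_eq[OF fB])
  also have "\<dots> = complex_of_real (real N ^ CARD('d) * (\<Sum>\<gamma>\<in>?B. (cmod (q \<gamma>))\<^sup>2))"
    unfolding of_real_mult of_real_sum complex_norm_square by (simp add: sum_distrib_left mult_ac)
  finally show ?thesis by (simp only: of_real_eq_iff)
qed



lemma pe_bdd:
  fixes a :: "('d::finite \<Rightarrow> nat) \<Rightarrow> complex"
  shows "bdd_above ((\<lambda>z. norm (poly_eval a z)) ` polydisc)"
proof (rule bdd_aboveI2)
  fix z :: "'d \<Rightarrow> complex" assume z: "z \<in> polydisc"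
  have "norm (poly_eval a z) \<le> (\<Sum>\<beta>\<in>{\<beta>. a \<beta> \<noteq> 0}. norm (a \<beta> * (\<Prod>j\<in>UNIV. z j ^ \<beta> j)))"
    unfolding poly_eval_def by (rule norm_sum)
  also have "\<dots> \<le> (\<Sum>\<beta>\<in>{\<beta>. a \<beta> \<noteq> 0}. norm (a \<beta>))"
  proof (rule sum_mono)
    fix \<beta>
    have "norm (\<Prod>j\<in>UNIV. z j ^ \<beta> j) = (\<Prod>j\<in>UNIV. norm (z j) ^ \<beta> j)"
      by (simp add: prod_norm[symmetric] norm_power)
    also have "\<dots> \<le> 1"
      using z by (intro prod_le_1) (auto simp: polydisc_def less_imp_le intro: power_le_one)
    finally have "norm (\<Prod>j\<in>UNIV. z j ^ \<beta> j) \<le> 1" .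
    then show "norm (a \<beta> * (\<Prod>j\<in>UNIV. z j ^ \<beta> j)) \<le> norm (a \<beta>)"
      by (simp add: norm_mult mult_left_le)
  qed
  finally show "norm (poly_eval a z) \<le> (\<Sum>\<beta>\<in>{\<beta>. a \<beta> \<noteq> 0}. norm (a \<beta>))" .
qed

lemma zero_polydisc: "(\<lambda>_. 0) \<in> polydisc"
  by (simp add: polydisc_def)

lemma S_nonneg: "0 \<le> (SUP z\<in>polydisc. norm (poly_eval a z))"
  by (rule order_trans[OF norm_ge_zero cSUP_upper[OF zero_polydisc pe_bdd]])

lemma torus_bound:
  fixes a :: "('d::finite \<Rightarrow> nat) \<Rightarrow> complex"
  assumes \<omega>: "\<And>j. norm (\<omega> j) = 1"
  shows "norm (poly_eval a \<omega>) \<le> (SUP z\<in>polydisc. norm (poly_eval a z))"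
proof -
  define f where "f r = norm (poly_eval a (\<lambda>j. complex_of_real r * \<omega> j))" for r :: real
  have cont: "isCont f 1" unfolding f_def poly_eval_def
    by (intro continuous_intros)
  then have lim: "(f \<longlongrightarrow> f 1) (at_left 1)"
    unfolding isCont_def by (rule tendsto_within_subset) auto
  have ev: "eventually (\<lambda>r. f r \<le> (SUP z\<in>polydisc. norm (poly_eval a z))) (at_left 1)"
    using eventually_at_left_real[of 0 "1::real"]
  proof (rule eventually_mono)
    fix r :: real assume r: "r \<in> {0<..<1}"
    have "(\<lambda>j. complex_of_real r * \<omega> j) \<in> polydisc"
      using r \<omega> by (simp add: polydisc_def norm_mult)
    then show "f r \<le> (SUP z\<in>polydisc. norm (poly_eval a z))"
      unfolding f_def by (rule cSUP_upper[OF _ pe_bdd])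
  qed simp
  have "f 1 \<le> (SUP z\<in>polydisc. norm (poly_eval a z))"
    by (rule tendsto_upperbound[OF lim ev]) simp
  then show ?thesis by (simp add: f_def)
qed

lemma supp_conv:
  assumes "conv a z \<gamma> \<noteq> 0"
  shows "\<exists>\<beta> \<alpha>. a \<beta> \<noteq> 0 \<and> z \<alpha> \<noteq> 0 \<and> \<gamma> = (\<lambda>j. \<beta> j + \<alpha> j)"
proof -
  from assms obtain \<beta> where b: "a \<beta> \<noteq> 0" "a \<beta> * shb \<beta> z \<gamma> \<noteq> 0"
    unfolding conv_def using sum.not_neutral_contains_not_neutral by blast
  then have le: "\<beta> \<le> \<gamma>" and nz: "z (\<lambda>i. \<gamma> i - \<beta> i) \<noteq> 0"
    by (auto simp: shb_def split: if_splits)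
  have "\<gamma> = (\<lambda>j. \<beta> j + (\<lambda>i. \<gamma> i - \<beta> i) j)" using le by (auto simp: le_fun_def)
  with b nz show ?thesis by blast
qed

lemma norm_zeta: "norm (zeta N) = 1"
  by (simp add: zeta_def norm_exp_eq_Re)

lemma vN_unw:
  fixes a z :: "('d::finite \<Rightarrow> nat) \<Rightarrow> complex"
  assumes fa: "finite {\<beta>. a \<beta> \<noteq> 0}" and fz: "finite {\<alpha>. z \<alpha> \<noteq> 0}"
    and fV: "finite V" and zV: "{\<alpha>. z \<alpha> \<noteq> 0} \<subseteq> V" and fG: "finite G"
    and tor: "\<And>\<omega>. (\<And>j. norm (\<omega> j) = 1) \<Longrightarrow> norm (poly_eval a \<omega>) \<le> S"
  shows "(\<Sum>\<gamma>\<in>G. (cmod (conv a z \<gamma>))\<^sup>2) \<le> S\<^sup>2 * (\<Sum>\<alpha>\<in>V. (cmod (z \<alpha>))\<^sup>2)"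
proof -
  define X where "X = {\<beta>. a \<beta> \<noteq> 0} \<union> {\<alpha>. z \<alpha> \<noteq> 0} \<union> G"
  have fX: "finite X" using fa fz fG by (simp add: X_def)
  define M where "M = Max ((\<lambda>(\<gamma>, j). \<gamma> j) ` (X \<times> (UNIV :: 'd set)))"
  have fXU: "finite ((\<lambda>(\<gamma>, j). \<gamma> j) ` (X \<times> (UNIV :: 'd set)))" using fX by simp
  have Mb: "\<gamma> j \<le> M" if "\<gamma> \<in> X" for \<gamma> j
    unfolding M_def by (rule Max_ge[OF fXU]) (use that in force)
  define N where "N = 2 * M + 2"
  have N: "N > 0" by (simp add: N_def)
  let ?B = "boxN N :: ('d \<Rightarrow> nat) set"
  have fB: "finite ?B" by (rule finite_boxN)
  have GB: "G \<subseteq> ?B"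
  proof
    fix \<gamma> assume g: "\<gamma> \<in> G"
    have "\<gamma> j < N" for j using Mb[of \<gamma> j] g by (simp add: X_def N_def)
    then show "\<gamma> \<in> ?B" by (simp add: boxN_def)
  qed
  have zB: "{\<alpha>. z \<alpha> \<noteq> 0} \<subseteq> ?B"
  proof
    fix \<gamma> assume g: "\<gamma> \<in> {\<alpha>. z \<alpha> \<noteq> 0}"
    have "\<gamma> j < N" for j using Mb[of \<gamma> j] g by (simp add: X_def N_def)
    then show "\<gamma> \<in> ?B" by (simp add: boxN_def)
  qed
  have cB: "{\<gamma>. conv a z \<gamma> \<noteq> 0} \<subseteq> ?B"
  proof
    fix \<gamma> assume "\<gamma> \<in> {\<gamma>. conv a z \<gamma> \<noteq> 0}"
    then obtain \<beta> \<alpha> where ba: "a \<beta> \<noteq> 0" "z \<alpha> \<noteq> 0" "\<gamma> = (\<lambda>j. \<beta> j + \<alpha> j)"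
      using supp_conv by blast
    have bm: "\<beta> j \<le> M" "\<alpha> j \<le> M" for j using Mb ba by (auto simp: X_def)
    have "\<gamma> j < N" for j using bm(1)[of j] bm(2)[of j] ba(3) by (simp add: N_def)
    then show "\<gamma> \<in> ?B" by (simp add: boxN_def)
  qed
  have tor': "norm (poly_eval a (om N k)) \<le> S" for k
    by (rule tor) (simp add: om_def norm_power norm_zeta)
  have S0: "0 \<le> S" using tor'[of undefined] norm_ge_zero order_trans by blast
  have "real N ^ CARD('d) * (\<Sum>\<gamma>\<in>G. (cmod (conv a z \<gamma>))\<^sup>2)
        \<le> real N ^ CARD('d) * (\<Sum>\<gamma>\<in>?B. (cmod (conv a z \<gamma>))\<^sup>2)"
    by (intro mult_left_mono sum_mono2[OF fB GB]) auto
  also have "\<dots> = (\<Sum>k\<in>?B. (cmod (poly_eval (conv a z) (om N k)))\<^sup>2)"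
    by (rule parseval[OF N cB, symmetric])
  also have "\<dots> = (\<Sum>k\<in>?B. (cmod (poly_eval a (om N k)))\<^sup>2 * (cmod (poly_eval z (om N k)))\<^sup>2)"
    by (simp add: pe_conv[OF fa fz] norm_mult power_mult_distrib)
  also have "\<dots> \<le> (\<Sum>k\<in>?B. S\<^sup>2 * (cmod (poly_eval z (om N k)))\<^sup>2)"
    by (intro sum_mono mult_right_mono power_mono tor') auto
  also have "\<dots> = S\<^sup>2 * (real N ^ CARD('d) * (\<Sum>\<gamma>\<in>?B. (cmod (z \<gamma>))\<^sup>2))"
    by (simp add: sum_distrib_left[symmetric] parseval[OF N zB])
  also have "(\<Sum>\<gamma>\<in>?B. (cmod (z \<gamma>))\<^sup>2) = (\<Sum>\<gamma>\<in>{\<alpha>. z \<alpha> \<noteq> 0}. (cmod (z \<gamma>))\<^sup>2)"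
    by (rule sum.mono_neutral_right[OF fB zB]) auto
  also have "\<dots> = (\<Sum>\<gamma>\<in>V. (cmod (z \<gamma>))\<^sup>2)"
    by (rule sum.mono_neutral_left[OF fV zV]) auto
  finally have "real N ^ CARD('d) * (\<Sum>\<gamma>\<in>G. (cmod (conv a z \<gamma>))\<^sup>2)
     \<le> real N ^ CARD('d) * (S\<^sup>2 * (\<Sum>\<gamma>\<in>V. (cmod (z \<gamma>))\<^sup>2))" by (simp add: mult_ac)
  then show ?thesis using N by (simp add: mult_le_cancel_left_pos)
qed

lemma vN_down:
  fixes a y :: "('d::finite \<Rightarrow> nat) \<Rightarrow> complex"
  assumes fa: "finite {\<beta>. a \<beta> \<noteq> 0}"
    and tor: "\<And>\<omega>. (\<And>j. norm (\<omega> j) = 1) \<Longrightarrow> norm (poly_eval a \<omega>) \<le> S"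
    and fU: "finite U" and down: "\<And>\<gamma> \<alpha>. \<gamma> \<in> U \<Longrightarrow> \<alpha> \<le> \<gamma> \<Longrightarrow> \<alpha> \<in> U"
  shows "(\<Sum>\<gamma>\<in>U. (cmod (conv a y \<gamma>))\<^sup>2) \<le> S\<^sup>2 * (\<Sum>\<gamma>\<in>U. (cmod (y \<gamma>))\<^sup>2)"
proof -
  define z where "z \<alpha> = (if \<alpha> \<in> U then y \<alpha> else 0)" for \<alpha>
  have zU: "{\<alpha>. z \<alpha> \<noteq> 0} \<subseteq> U" by (auto simp: z_def)
  have fz: "finite {\<alpha>. z \<alpha> \<noteq> 0}" using finite_subset[OF zU fU] .
  have eq: "conv a y \<gamma> = conv a z \<gamma>" if "\<gamma> \<in> U" for \<gamma>
    unfolding conv_def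
  proof (rule sum.cong[OF refl])
    fix \<beta>
    have "\<beta> \<le> \<gamma> \<Longrightarrow> (\<lambda>i. \<gamma> i - \<beta> i) \<in> U"
      using down[OF that] by (auto simp: le_fun_def)
    then show "a \<beta> * shb \<beta> y \<gamma> = a \<beta> * shb \<beta> z \<gamma>"
      by (auto simp: shb_def z_def)
  qed
  have "(\<Sum>\<gamma>\<in>U. (cmod (conv a y \<gamma>))\<^sup>2) = (\<Sum>\<gamma>\<in>U. (cmod (conv a z \<gamma>))\<^sup>2)"
    by (rule sum.cong) (auto simp: eq)
  also have "\<dots> \<le> S\<^sup>2 * (\<Sum>\<gamma>\<in>U. (cmod (z \<gamma>))\<^sup>2)"
    by (rule vN_unw[OF fa fz fU zU fU tor])
  also have "(\<Sum>\<gamma>\<in>U. (cmod (z \<gamma>))\<^sup>2) = (\<Sum>\<gamma>\<in>U. (cmod (y \<gamma>))\<^sup>2)"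
    by (rule sum.cong) (auto simp: z_def)
  finally show ?thesis .
qed



lemma vN_weighted_aux:
  fixes a y :: "('d::finite \<Rightarrow> nat) \<Rightarrow> complex"
  assumes fa: "finite {\<beta>. a \<beta> \<noteq> 0}"
    and tor: "\<And>\<omega>. (\<And>j. norm (\<omega> j) = 1) \<Longrightarrow> norm (poly_eval a \<omega>) \<le> S"
  shows "card {\<gamma>. 0 < \<nu> \<gamma>} = n \<Longrightarrow> (\<And>\<gamma>. 0 \<le> \<nu> \<gamma>) \<Longrightarrow> (\<And>\<alpha> \<gamma>. \<alpha> \<le> \<gamma> \<Longrightarrow> \<nu> \<gamma> \<le> \<nu> \<alpha>)
    \<Longrightarrow> finite {\<gamma>. 0 < \<nu> \<gamma>} \<Longrightarrow>
    (\<Sum>\<gamma>\<in>{\<gamma>. 0 < \<nu> \<gamma>}. \<nu> \<gamma> * (cmod (conv a y \<gamma>))\<^sup>2)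
      \<le> S\<^sup>2 * (\<Sum>\<gamma>\<in>{\<gamma>. 0 < \<nu> \<gamma>}. \<nu> \<gamma> * (cmod (y \<gamma>))\<^sup>2)"
proof (induction n arbitrary: \<nu> rule: less_induct)
  case (less n \<nu>)
  define P where "P = {\<gamma>. 0 < \<nu> \<gamma>}"
  have fP: "finite P" using less.prems(4) by (simp add: P_def)
  show ?case
  proof (cases "P = {}")
    case True
    then show ?thesis by (simp add: P_def)
  next
    case False
    define m where "m = Min (\<nu> ` P)"
    have mP: "m \<in> \<nu> ` P" unfolding m_def using fP False by (intro Min_in) auto
    then obtain \<gamma>0 where g0: "\<gamma>0 \<in> P" "\<nu> \<gamma>0 = m" by auto
    have m0: "0 < m" using g0 by (simp add: P_def)
    have mle: "m \<le> \<nu> \<gamma>" if "\<gamma> \<in> P" for \<gamma> unfolding m_def using fP that by simp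
    define \<nu>' where "\<nu>' \<gamma> = (if \<gamma> \<in> P then \<nu> \<gamma> - m else 0)" for \<gamma>
    define P' where "P' = {\<gamma>. 0 < \<nu>' \<gamma>}"
    have P'sub: "P' \<subseteq> P - {\<gamma>0}" using g0 by (auto simp: P'_def \<nu>'_def split: if_splits)
    have fP': "finite P'" using finite_subset[OF P'sub] fP by simp
    have cardlt: "card P' < n"
    proof -
      have "card P' \<le> card (P - {\<gamma>0})" by (rule card_mono) (use fP P'sub in auto)
      also have "\<dots> < card P" by (rule card_Diff1_less[OF fP g0(1)])
      finally show ?thesis using less.prems(1) P_def by simp
    qed
    have nn': "0 \<le> \<nu>' \<gamma>" for \<gamma> using mle by (simp add: \<nu>'_def)
    have down: "\<alpha> \<in> P" if "\<gamma> \<in> P" "\<alpha> \<le> \<gamma>" for \<alpha> \<gamma>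
      using that less.prems(3)[of \<alpha> \<gamma>] by (simp add: P_def)
    have anti': "\<nu>' \<gamma> \<le> \<nu>' \<alpha>" if "\<alpha> \<le> \<gamma>" for \<alpha> \<gamma>
    proof (cases "\<gamma> \<in> P")
      case True
      then have "\<alpha> \<in> P" using down that by blast
      then show ?thesis using True less.prems(3)[OF that] by (simp add: \<nu>'_def)
    next
      case False
      then show ?thesis using nn'[of \<alpha>] by (simp add: \<nu>'_def)
    qed
    have IH: "(\<Sum>\<gamma>\<in>P'. \<nu>' \<gamma> * (cmod (conv a y \<gamma>))\<^sup>2) \<le> S\<^sup>2 * (\<Sum>\<gamma>\<in>P'. \<nu>' \<gamma> * (cmod (y \<gamma>))\<^sup>2)"
      using less.IH[OF cardlt, of \<nu>'] nn' anti' fP' by (simp add: P'_def)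
    have red: "(\<Sum>\<gamma>\<in>P. \<nu>' \<gamma> * f \<gamma>) = (\<Sum>\<gamma>\<in>P'. \<nu>' \<gamma> * f \<gamma>)" for f :: "_ \<Rightarrow> real"
    proof (rule sum.mono_neutral_right[OF fP])
      show "P' \<subseteq> P" using P'sub by blast
      show "\<forall>i\<in>P - P'. \<nu>' i * f i = 0"
        using nn' by (auto simp: P'_def) (metis less_eq_real_def)
    qed
    have split: "(\<Sum>\<gamma>\<in>P. \<nu> \<gamma> * f \<gamma>) = m * (\<Sum>\<gamma>\<in>P. f \<gamma>) + (\<Sum>\<gamma>\<in>P. \<nu>' \<gamma> * f \<gamma>)" for f :: "_ \<Rightarrow> real"
    proof -
      have "(\<Sum>\<gamma>\<in>P. \<nu> \<gamma> * f \<gamma>) = (\<Sum>\<gamma>\<in>P. m * f \<gamma> + \<nu>' \<gamma> * f \<gamma>)"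
        by (rule sum.cong) (auto simp: \<nu>'_def algebra_simps)
      then show ?thesis by (simp add: sum.distrib sum_distrib_left)
    qed
    have dn: "(\<Sum>\<gamma>\<in>P. (cmod (conv a y \<gamma>))\<^sup>2) \<le> S\<^sup>2 * (\<Sum>\<gamma>\<in>P. (cmod (y \<gamma>))\<^sup>2)"
      by (rule vN_down[OF fa tor fP]) (use down in blast)+
    have "(\<Sum>\<gamma>\<in>P. \<nu> \<gamma> * (cmod (conv a y \<gamma>))\<^sup>2)
        = m * (\<Sum>\<gamma>\<in>P. (cmod (conv a y \<gamma>))\<^sup>2) + (\<Sum>\<gamma>\<in>P'. \<nu>' \<gamma> * (cmod (conv a y \<gamma>))\<^sup>2)"
      by (simp add: split red)
    also have "\<dots> \<le> m * (S\<^sup>2 * (\<Sum>\<gamma>\<in>P. (cmod (y \<gamma>))\<^sup>2)) + S\<^sup>2 * (\<Sum>\<gamma>\<in>P'. \<nu>' \<gamma> * (cmod (y \<gamma>))\<^sup>2)"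
      using dn IH m0 by (intro add_mono mult_left_mono) auto
    also have "\<dots> = S\<^sup>2 * (\<Sum>\<gamma>\<in>P. \<nu> \<gamma> * (cmod (y \<gamma>))\<^sup>2)"
      by (simp add: split red algebra_simps)
    finally show ?thesis by (simp add: P_def)
  qed
qed



lemma sum_dec_less:
  fixes \<gamma> :: "'d::finite \<Rightarrow> nat"
  assumes "\<gamma> s \<noteq> 0"
  shows "(\<Sum>j\<in>UNIV. (\<gamma>(s := \<gamma> s - 1)) j) < (\<Sum>j\<in>UNIV. \<gamma> j)"
proof -
  have "(\<Sum>j\<in>UNIV. (\<gamma>(s := \<gamma> s - 1)) j) = (\<gamma> s - 1) + (\<Sum>j\<in>UNIV - {s}. \<gamma> j)"
    by (simp add: sum.remove[of UNIV s])
  also have "\<dots> < \<gamma> s + (\<Sum>j\<in>UNIV - {s}. \<gamma> j)" using assms by simp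
  also have "\<dots> = (\<Sum>j\<in>UNIV. \<gamma> j)" by (simp add: sum.remove[of UNIV s])
  finally show ?thesis .
qed

function cw :: "('d::finite \<Rightarrow> ('d \<Rightarrow> nat) \<Rightarrow> complex) \<Rightarrow> ('d \<Rightarrow> nat) \<Rightarrow> complex" where
  "cw w \<gamma> = (if \<exists>j. \<gamma> j \<noteq> 0
     then w (SOME j. \<gamma> j \<noteq> 0) (\<gamma>((SOME j. \<gamma> j \<noteq> 0) := \<gamma> (SOME j. \<gamma> j \<noteq> 0) - 1))
          * cw w (\<gamma>((SOME j. \<gamma> j \<noteq> 0) := \<gamma> (SOME j. \<gamma> j \<noteq> 0) - 1))
     else 1)"
  by pat_completeness auto
termination
proof (relation "Wellfounded.measure (\<lambda>(w, \<gamma>). \<Sum>j\<in>UNIV. \<gamma> j)")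
  fix w :: "'d::finite \<Rightarrow> ('d \<Rightarrow> nat) \<Rightarrow> complex" and \<gamma> :: "'d \<Rightarrow> nat"
  assume ex: "\<exists>j. \<gamma> j \<noteq> 0"
  have "\<gamma> (SOME j. \<gamma> j \<noteq> 0) \<noteq> 0" using someI_ex[OF ex] .
  then show "((w, \<gamma>((SOME j. \<gamma> j \<noteq> 0) := \<gamma> (SOME j. \<gamma> j \<noteq> 0) - 1)), (w, \<gamma>))
        \<in> Wellfounded.measure (\<lambda>(w, \<gamma>). \<Sum>j\<in>UNIV. \<gamma> j)"
    unfolding in_measure prod.case by (rule sum_dec_less[of \<gamma> "SOME j. \<gamma> j \<noteq> 0"])
qed simp

declare cw.simps[simp del]

lemma cw_some:
  assumes ex: "\<exists>j. \<gamma> j \<noteq> 0"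
  defines "s \<equiv> (SOME j. \<gamma> j \<noteq> 0)"
  shows "\<gamma> s \<noteq> 0" "cw w \<gamma> = w s (\<gamma>(s := \<gamma> s - 1)) * cw w (\<gamma>(s := \<gamma> s - 1))"
  using someI_ex[OF ex] cw.simps[of w \<gamma>] ex unfolding s_def by auto

lemma cw_zero: "cw w (\<lambda>_. 0) = 1"
  by (simp add: cw.simps)

definition commw :: "('d \<Rightarrow> ('d \<Rightarrow> nat) \<Rightarrow> complex) \<Rightarrow> bool" where
  "commw w \<longleftrightarrow> (\<forall>\<alpha> i j. w i (add_unit \<alpha> j) * w j \<alpha> = w j (add_unit \<alpha> i) * w i \<alpha>)"

lemma cw_step:
  fixes w :: "'d::finite \<Rightarrow> ('d \<Rightarrow> nat) \<Rightarrow> complex"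
  assumes cm: "commw w"
  shows "\<gamma> j \<noteq> 0 \<Longrightarrow> cw w \<gamma> = w j (\<gamma>(j := \<gamma> j - 1)) * cw w (\<gamma>(j := \<gamma> j - 1))"
proof (induction \<gamma> arbitrary: j rule: measure_induct_rule[where f="\<lambda>\<gamma>. \<Sum>j\<in>UNIV. \<gamma> j"])
  case (less \<gamma> j)
  have ex: "\<exists>j. \<gamma> j \<noteq> 0" using less.prems by blast
  define s where "s = (SOME j. \<gamma> j \<noteq> 0)"
  have s0: "\<gamma> s \<noteq> 0" and cg: "cw w \<gamma> = w s (\<gamma>(s := \<gamma> s - 1)) * cw w (\<gamma>(s := \<gamma> s - 1))"
    using cw_some[OF ex] unfolding s_def by auto
  show ?case
  proof (cases "s = j")
    case True
    then show ?thesis using cg by (simp only: True)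
  next
    case False
    define g1 where "g1 = \<gamma>(s := \<gamma> s - 1)"
    define g2 where "g2 = \<gamma>(j := \<gamma> j - 1)"
    define \<alpha> where "\<alpha> = \<gamma>(s := \<gamma> s - 1, j := \<gamma> j - 1)"
    have IH1: "cw w g1 = w j \<alpha> * cw w \<alpha>"
    proof -
      have m1: "(\<Sum>i\<in>UNIV. g1 i) < (\<Sum>i\<in>UNIV. \<gamma> i)" unfolding g1_def by (rule sum_dec_less[of \<gamma> s, OF s0])
      have "g1 j \<noteq> 0" using less.prems False by (simp add: g1_def)
      then have "cw w g1 = w j (g1(j := g1 j - 1)) * cw w (g1(j := g1 j - 1))"
        by (rule less.IH[OF m1])
      moreover have "g1(j := g1 j - 1) = \<alpha>" using False by (simp add: g1_def \<alpha>_def)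
      ultimately show ?thesis by simp
    qed
    have IH2: "cw w g2 = w s \<alpha> * cw w \<alpha>"
    proof -
      have m2: "(\<Sum>i\<in>UNIV. g2 i) < (\<Sum>i\<in>UNIV. \<gamma> i)" unfolding g2_def by (rule sum_dec_less[of \<gamma> j, OF less.prems])
      have "g2 s \<noteq> 0" using s0 False by (simp add: g2_def)
      then have "cw w g2 = w s (g2(s := g2 s - 1)) * cw w (g2(s := g2 s - 1))"
        by (rule less.IH[OF m2])
      moreover have "g2(s := g2 s - 1) = \<alpha>" using False by (auto simp: g2_def \<alpha>_def fun_eq_iff)
      ultimately show ?thesis by simp
    qed
    have a1: "add_unit \<alpha> j = g1" using False less.prems by (auto simp: add_unit_def \<alpha>_def g1_def fun_eq_iff)
    have a2: "add_unit \<alpha> s = g2" using False s0 by (auto simp: add_unit_def \<alpha>_def g2_def fun_eq_iff)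
    have c: "w s g1 * w j \<alpha> = w j g2 * w s \<alpha>"
      using cm unfolding commw_def by (metis a1 a2)
    have "cw w \<gamma> = w s g1 * (w j \<alpha> * cw w \<alpha>)" using cg IH1 by (simp add: g1_def)
    also have "\<dots> = (w s g1 * w j \<alpha>) * cw w \<alpha>" by (simp add: mult.assoc)
    also have "\<dots> = w j g2 * (w s \<alpha> * cw w \<alpha>)" by (simp add: c mult.assoc)
    also have "\<dots> = w j g2 * cw w g2" by (simp add: IH2)
    finally show ?thesis by (simp only: g2_def)
  qed
qed

lemma cw_add_unit:
  fixes w :: "'d::finite \<Rightarrow> ('d \<Rightarrow> nat) \<Rightarrow> complex"
  assumes cm: "commw w"
  shows "cw w (add_unit \<alpha> j) = w j \<alpha> * cw w \<alpha>"
proof -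
  have "(add_unit \<alpha> j) j \<noteq> 0" by (simp add: add_unit_def)
  from cw_step[OF cm, of "add_unit \<alpha> j" j, OF this] show ?thesis by (simp add: add_unit_def)
qed

lemma cw_nonzero:
  fixes w :: "'d::finite \<Rightarrow> ('d \<Rightarrow> nat) \<Rightarrow> complex"
  assumes nz: "\<And>j \<alpha>. w j \<alpha> \<noteq> 0"
  shows "cw w \<gamma> \<noteq> 0"
proof (induction \<gamma> rule: measure_induct_rule[where f="\<lambda>\<gamma>. \<Sum>j\<in>UNIV. \<gamma> j"])
  case (less \<gamma>)
  show ?case
  proof (cases "\<exists>j. \<gamma> j \<noteq> 0")
    case True
    define s where "s = (SOME j. \<gamma> j \<noteq> 0)"
    have s0: "\<gamma> s \<noteq> 0" and cg: "cw w \<gamma> = w s (\<gamma>(s := \<gamma> s - 1)) * cw w (\<gamma>(s := \<gamma> s - 1))"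
      using cw_some[OF True] unfolding s_def by auto
    have m: "(\<Sum>i\<in>UNIV. (\<gamma>(s := \<gamma> s - 1)) i) < (\<Sum>i\<in>UNIV. \<gamma> i)" by (rule sum_dec_less[of \<gamma> s, OF s0])
    have "cw w (\<gamma>(s := \<gamma> s - 1)) \<noteq> 0" by (rule less.IH[OF m])
    then show ?thesis using nz[of s "\<gamma>(s := \<gamma> s - 1)"] by (simp only: cg mult_eq_0_iff) blast
  next
    case False
    then have "\<gamma> = (\<lambda>_. 0)" by auto
    then show ?thesis by (simp add: cw_zero)
  qed
qed

lemma cw_anti:
  fixes w :: "'d::finite \<Rightarrow> ('d \<Rightarrow> nat) \<Rightarrow> complex"
  assumes cm: "commw w" and le1: "\<And>j \<alpha>. norm (w j \<alpha>) \<le> 1"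
  shows "\<alpha> \<le> \<gamma> \<Longrightarrow> norm (cw w \<gamma>) \<le> norm (cw w \<alpha>)"
proof (induction \<gamma> rule: measure_induct_rule[where f="\<lambda>\<gamma>. \<Sum>j\<in>UNIV. \<gamma> j"])
  case (less \<gamma>)
  show ?case
  proof (cases "\<gamma> = \<alpha>")
    case True then show ?thesis by simp
  next
    case False
    then obtain j where j: "\<alpha> j < \<gamma> j" using less.prems
      by (metis le_funD le_funI nat_less_le order_antisym)
    then have g0: "\<gamma> j \<noteq> 0" by simp
    define g' where "g' = \<gamma>(j := \<gamma> j - 1)"
    have "\<alpha> \<le> g'" using less.prems j by (auto simp: g'_def le_fun_def)
    have m: "(\<Sum>i\<in>UNIV. g' i) < (\<Sum>i\<in>UNIV. \<gamma> i)" unfolding g'_def by (rule sum_dec_less[of \<gamma> j, OF g0])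
    have ih: "norm (cw w g') \<le> norm (cw w \<alpha>)" by (rule less.IH[OF m \<open>\<alpha> \<le> g'\<close>])
    have "norm (cw w \<gamma>) = norm (w j g') * norm (cw w g')"
      using cw_step[OF cm, of \<gamma> j, OF g0] by (simp add: g'_def norm_mult)
    also have "\<dots> \<le> 1 * norm (cw w g')" by (intro mult_right_mono le1) auto
    finally show ?thesis using ih by simp
  qed
qed



definition Wk :: "('d \<Rightarrow> ('d \<Rightarrow> nat) \<Rightarrow> complex^'n^'n) \<Rightarrow> 'n \<Rightarrow> 'd \<Rightarrow> ('d \<Rightarrow> nat) \<Rightarrow> complex" where
  "Wk A k = (\<lambda>j \<alpha>. A j \<alpha> $ k $ k)"

definition sshift :: "('d \<Rightarrow> ('d \<Rightarrow> nat) \<Rightarrow> complex) \<Rightarrow> 'd \<Rightarrow> (('d \<Rightarrow> nat) \<Rightarrow> complex) \<Rightarrow> (('d \<Rightarrow> nat) \<Rightarrow> complex)" where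
  "sshift w j f = (\<lambda>\<alpha>. if \<alpha> j = 0 then 0 else w j (\<alpha>(j := \<alpha> j - 1)) * f (\<alpha>(j := \<alpha> j - 1)))"

definition sh :: "'d \<Rightarrow> (('d \<Rightarrow> nat) \<Rightarrow> complex) \<Rightarrow> (('d \<Rightarrow> nat) \<Rightarrow> complex)" where
  "sh j g = (\<lambda>\<alpha>. if \<alpha> j = 0 then 0 else g (\<alpha>(j := \<alpha> j - 1)))"

lemma diag_mv:
  fixes M :: "complex^'n^'n"
  assumes "is_diag_matrix M"
  shows "(M *v v) $ k = M $ k $ k * v $ k"
proof -
  have "(M *v v) $ k = (\<Sum>l\<in>UNIV. M $ k $ l * v $ l)" by (simp add: matrix_vector_mult_def)
  also have "\<dots> = (\<Sum>l\<in>UNIV. if l = k then M $ k $ k * v $ k else 0)"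
    by (rule sum.cong) (use assms in \<open>auto simp: is_diag_matrix_def\<close>)
  also have "\<dots> = M $ k $ k * v $ k" by simp
  finally show ?thesis .
qed

lemma comp_mshift:
  assumes diag: "\<And>j \<alpha>. is_diag_matrix (A j \<alpha>)"
  shows "(\<lambda>\<alpha>. mshift A j x \<alpha> $ k) = sshift (Wk A k) j (\<lambda>\<alpha>. x \<alpha> $ k)"
  by (auto simp: mshift_def sshift_def Wk_def diag_mv[OF diag] fun_eq_iff)

lemma comp_pow:
  assumes diag: "\<And>j \<alpha>. is_diag_matrix (A j \<alpha>)"
  shows "(\<lambda>\<alpha>. (mshift A j ^^ n) x \<alpha> $ k) = (sshift (Wk A k) j ^^ n) (\<lambda>\<alpha>. x \<alpha> $ k)"
proof (induction n)
  case 0 then show ?case by simp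
next
  case (Suc n)
  have "(\<lambda>\<alpha>. (mshift A j ^^ Suc n) x \<alpha> $ k) = (\<lambda>\<alpha>. mshift A j ((mshift A j ^^ n) x) \<alpha> $ k)" by simp
  also have "\<dots> = sshift (Wk A k) j (\<lambda>\<alpha>. (mshift A j ^^ n) x \<alpha> $ k)" by (rule comp_mshift[OF diag])
  also have "\<dots> = (sshift (Wk A k) j ^^ Suc n) (\<lambda>\<alpha>. x \<alpha> $ k)" using Suc by simp
  finally show ?case .
qed

lemma comp_fold:
  assumes diag: "\<And>j \<alpha>. is_diag_matrix (A j \<alpha>)"
  shows "(\<lambda>\<alpha>. foldr (\<lambda>j f. (mshift A j ^^ \<beta> j) \<circ> f) L id x \<alpha> $ k)
        = foldr (\<lambda>j f. (sshift (Wk A k) j ^^ \<beta> j) \<circ> f) L id (\<lambda>\<alpha>. x \<alpha> $ k)"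
proof (induction L)
  case Nil then show ?case by simp
next
  case (Cons j L)
  have "(\<lambda>\<alpha>. foldr (\<lambda>j f. (mshift A j ^^ \<beta> j) \<circ> f) (j # L) id x \<alpha> $ k)
     = (\<lambda>\<alpha>. (mshift A j ^^ \<beta> j) (foldr (\<lambda>j f. (mshift A j ^^ \<beta> j) \<circ> f) L id x) \<alpha> $ k)" by simp
  also have "\<dots> = (sshift (Wk A k) j ^^ \<beta> j) (\<lambda>\<alpha>. foldr (\<lambda>j f. (mshift A j ^^ \<beta> j) \<circ> f) L id x \<alpha> $ k)"
    by (rule comp_pow[OF diag])
  also have "\<dots> = (sshift (Wk A k) j ^^ \<beta> j) (foldr (\<lambda>j f. (sshift (Wk A k) j ^^ \<beta> j) \<circ> f) L id (\<lambda>\<alpha>. x \<alpha> $ k))"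
    by (simp only: Cons.IH)
  also have "\<dots> = foldr (\<lambda>j f. (sshift (Wk A k) j ^^ \<beta> j) \<circ> f) (j # L) id (\<lambda>\<alpha>. x \<alpha> $ k)"
    by simp
  finally show ?case .
qed

lemma sshift_conj:
  assumes cstep: "\<And>\<alpha> j. c (add_unit \<alpha> j) = w j \<alpha> * c \<alpha>"
  shows "sshift w j (\<lambda>\<alpha>. c \<alpha> * g \<alpha>) = (\<lambda>\<alpha>. c \<alpha> * sh j g \<alpha>)"
proof
  fix \<alpha> :: "'a \<Rightarrow> nat"
  show "sshift w j (\<lambda>\<alpha>. c \<alpha> * g \<alpha>) \<alpha> = c \<alpha> * sh j g \<alpha>"
  proof (cases "\<alpha> j = 0")
    case True then show ?thesis by (simp add: sshift_def sh_def)
  next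
    case False
    have "add_unit (\<alpha>(j := \<alpha> j - 1)) j = \<alpha>" using False by (auto simp: add_unit_def fun_eq_iff)
    then have "c \<alpha> = w j (\<alpha>(j := \<alpha> j - 1)) * c (\<alpha>(j := \<alpha> j - 1))" using cstep by metis
    then show ?thesis using False by (simp add: sshift_def sh_def mult_ac)
  qed
qed

lemma sshift_pow_conj:
  assumes cstep: "\<And>\<alpha> j. c (add_unit \<alpha> j) = w j \<alpha> * c \<alpha>"
  shows "(sshift w j ^^ n) (\<lambda>\<alpha>. c \<alpha> * g \<alpha>) = (\<lambda>\<alpha>. c \<alpha> * (sh j ^^ n) g \<alpha>)"
  by (induction n) (simp_all add: sshift_conj[OF cstep])

lemma fold_conj:
  assumes cstep: "\<And>\<alpha> j. c (add_unit \<alpha> j) = w j \<alpha> * c \<alpha>"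
  shows "foldr (\<lambda>j f. (sshift w j ^^ \<beta> j) \<circ> f) L id (\<lambda>\<alpha>. c \<alpha> * g \<alpha>)
       = (\<lambda>\<alpha>. c \<alpha> * foldr (\<lambda>j f. (sh j ^^ \<beta> j) \<circ> f) L id g \<alpha>)"
  by (induction L) (simp_all add: sshift_pow_conj[OF cstep])

lemma sh_pow: "(sh j ^^ n) g = (\<lambda>\<gamma>. if n \<le> \<gamma> j then g (\<gamma>(j := \<gamma> j - n)) else 0)"
proof (induction n)
  case 0 then show ?case by simp
next
  case (Suc n)
  show ?case
  proof
    fix \<gamma> :: "'a \<Rightarrow> nat"
    show "(sh j ^^ Suc n) g \<gamma> = (if Suc n \<le> \<gamma> j then g (\<gamma>(j := \<gamma> j - Suc n)) else 0)"
      unfolding funpow.simps o_apply Suc.IH by (auto simp: sh_def)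
  qed
qed

lemma fold_sh:
  assumes "distinct L"
  shows "foldr (\<lambda>j f. (sh j ^^ \<beta> j) \<circ> f) L id g
     = (\<lambda>\<gamma>. if (\<forall>j\<in>set L. \<beta> j \<le> \<gamma> j) then g (\<lambda>i. if i \<in> set L then \<gamma> i - \<beta> i else \<gamma> i) else 0)"
  using assms
proof (induction L)
  case Nil then show ?case by simp
next
  case (Cons j L)
  show ?case
  proof
    fix \<gamma> :: "'a \<Rightarrow> nat"
    have jL: "j \<notin> set L" using Cons.prems by simp
    have eq: "(\<lambda>i. if i \<in> set L then (\<gamma>(j := \<gamma> j - \<beta> j)) i - \<beta> i else (\<gamma>(j := \<gamma> j - \<beta> j)) i)
            = (\<lambda>i. if i \<in> set (j # L) then \<gamma> i - \<beta> i else \<gamma> i)"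
      using jL by (auto simp: fun_eq_iff)
    have IH: "foldr (\<lambda>j f. (sh j ^^ \<beta> j) \<circ> f) L id g
     = (\<lambda>\<gamma>. if (\<forall>j\<in>set L. \<beta> j \<le> \<gamma> j) then g (\<lambda>i. if i \<in> set L then \<gamma> i - \<beta> i else \<gamma> i) else 0)"
      using Cons.prems by (intro Cons.IH) simp
    have upd: "(\<gamma>(j := \<gamma> j - \<beta> j)) i = \<gamma> i" if "i \<in> set L" for i using jL that by auto
    have "foldr (\<lambda>j f. (sh j ^^ \<beta> j) \<circ> f) (j # L) id g \<gamma>
        = (sh j ^^ \<beta> j) (foldr (\<lambda>j f. (sh j ^^ \<beta> j) \<circ> f) L id g) \<gamma>"
      by simp
    also have "\<dots> = (if \<beta> j \<le> \<gamma> j then (if (\<forall>i\<in>set L. \<beta> i \<le> \<gamma> i)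
        then g (\<lambda>i. if i \<in> set L then (\<gamma>(j := \<gamma> j - \<beta> j)) i - \<beta> i else (\<gamma>(j := \<gamma> j - \<beta> j)) i) else 0) else 0)"
      unfolding sh_pow IH using upd by simp
    also have "\<dots> = (if \<forall>j\<in>set (j # L). \<beta> j \<le> \<gamma> j then g (\<lambda>i. if i \<in> set (j # L) then \<gamma> i - \<beta> i else \<gamma> i) else 0)"
      unfolding eq by auto
    finally show "foldr (\<lambda>j f. (sh j ^^ \<beta> j) \<circ> f) (j # L) id g \<gamma> =
      (if \<forall>j\<in>set (j # L). \<beta> j \<le> \<gamma> j then g (\<lambda>i. if i \<in> set (j # L) then \<gamma> i - \<beta> i else \<gamma> i) else 0)" .
  qed
qed

lemma fold_sh_univ:
  "foldr (\<lambda>j f. (sh j ^^ \<beta> j) \<circ> f) (sorted_list_of_set (UNIV :: 'd::{finite,linorder} set)) id g = shb \<beta> g"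
proof -
  have "set (sorted_list_of_set (UNIV :: 'd set)) = UNIV" by simp
  then show ?thesis by (simp add: fold_sh shb_def le_fun_def cong: if_cong)
qed

lemma mshift_pow_comp:
  fixes A :: "'d::{finite,linorder} \<Rightarrow> ('d \<Rightarrow> nat) \<Rightarrow> complex^'n^'n"
  assumes diag: "\<And>j \<alpha>. is_diag_matrix (A j \<alpha>)"
    and cstep: "\<And>\<alpha> j. c (add_unit \<alpha> j) = Wk A k j \<alpha> * c \<alpha>"
    and cnz: "\<And>\<alpha>. c \<alpha> \<noteq> 0"
  shows "mshift_pow A \<beta> x \<gamma> $ k = c \<gamma> * shb \<beta> (\<lambda>\<alpha>. x \<alpha> $ k / c \<alpha>) \<gamma>"
proof -
  have xk: "(\<lambda>\<alpha>. x \<alpha> $ k) = (\<lambda>\<alpha>. c \<alpha> * (x \<alpha> $ k / c \<alpha>))" using cnz by auto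
  have "(\<lambda>\<alpha>. mshift_pow A \<beta> x \<alpha> $ k)
      = foldr (\<lambda>j f. (sshift (Wk A k) j ^^ \<beta> j) \<circ> f) (sorted_list_of_set UNIV) id (\<lambda>\<alpha>. x \<alpha> $ k)"
    unfolding mshift_pow_def by (rule comp_fold[OF diag])
  also have "\<dots> = (\<lambda>\<alpha>. c \<alpha> * shb \<beta> (\<lambda>\<alpha>. x \<alpha> $ k / c \<alpha>) \<alpha>)"
    by (subst xk, subst fold_conj[OF cstep], subst fold_sh_univ) (rule refl)
  finally show ?thesis by (metis (mono_tags))
qed

lemma poly_comp:
  fixes A :: "'d::{finite,linorder} \<Rightarrow> ('d \<Rightarrow> nat) \<Rightarrow> complex^'n^'n"
  assumes diag: "\<And>j \<alpha>. is_diag_matrix (A j \<alpha>)"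
    and cstep: "\<And>\<alpha> j. c (add_unit \<alpha> j) = Wk A k j \<alpha> * c \<alpha>"
    and cnz: "\<And>\<alpha>. c \<alpha> \<noteq> 0"
  shows "poly_of_mshift a A x \<gamma> $ k = c \<gamma> * conv a (\<lambda>\<alpha>. x \<alpha> $ k / c \<alpha>) \<gamma>"
  by (simp add: poly_of_mshift_def conv_def mshift_pow_comp[OF diag cstep cnz] sum_distrib_left mult_ac)



lemma diag_mm:
  fixes M M' :: "complex^'n^'n"
  assumes "is_diag_matrix M"
  shows "(M ** M') $ k $ k = M $ k $ k * M' $ k $ k"
proof -
  have "(M ** M') $ k $ k = (\<Sum>l\<in>UNIV. M $ k $ l * M' $ l $ k)" by (simp add: matrix_matrix_mult_def)
  also have "\<dots> = (\<Sum>l\<in>UNIV. if l = k then M $ k $ k * M' $ k $ k else 0)"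
    by (rule sum.cong) (use assms in \<open>auto simp: is_diag_matrix_def\<close>)
  also have "\<dots> = M $ k $ k * M' $ k $ k" by simp
  finally show ?thesis .
qed

lemma commw_Wk:
  assumes "commuting_multishift_weights A" and diag: "\<And>j \<alpha>. is_diag_matrix (A j \<alpha>)"
  shows "commw (Wk A k)"
  unfolding commw_def Wk_def
proof (intro allI)
  fix \<alpha> i j
  have "A i (add_unit \<alpha> j) ** A j \<alpha> = A j (add_unit \<alpha> i) ** A i \<alpha>"
    using assms(1) unfolding commuting_multishift_weights_def by blast
  then have "(A i (add_unit \<alpha> j) ** A j \<alpha>) $ k $ k = (A j (add_unit \<alpha> i) ** A i \<alpha>) $ k $ k" by simp
  then show "A i (add_unit \<alpha> j) $ k $ k * A j \<alpha> $ k $ k = A j (add_unit \<alpha> i) $ k $ k * A i \<alpha> $ k $ k"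
    by (simp add: diag_mm[OF diag])
qed

lemma diag_inv_nz:
  fixes M :: "complex^'n^'n"
  assumes "is_diag_matrix M" "invertible M"
  shows "M $ k $ k \<noteq> 0"
proof
  assume h: "M $ k $ k = 0"
  obtain M' where "M ** M' = mat 1" using assms(2) unfolding invertible_def by blast
  then have "(M ** M') $ k $ k = 1" by (simp add: mat_def)
  then show False using h by (simp add: diag_mm[OF assms(1)])
qed

lemma single_l2:
  fixes v :: "complex^'n"
  shows "in_l2 (\<lambda>\<beta>::'d \<Rightarrow> nat. if \<beta> = \<alpha> then v else 0)"
    and "l2norm (\<lambda>\<beta>::'d \<Rightarrow> nat. if \<beta> = \<alpha> then v else 0) = norm v"
proof -
  have "finite {\<beta>\<in>UNIV. (norm (if \<beta> = \<alpha> then v else 0))\<^sup>2 \<noteq> 0}"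
    by (rule finite_subset[of _ "{\<alpha>}"]) auto
  then show "in_l2 (\<lambda>\<beta>::'d \<Rightarrow> nat. if \<beta> = \<alpha> then v else 0)"
    unfolding in_l2_def by (rule finite_nonzero_values_imp_summable_on)
  have "(\<Sum>\<^sub>\<infinity>\<beta>. (norm (if \<beta> = \<alpha> then v else 0))\<^sup>2) = (\<Sum>\<^sub>\<infinity>\<beta>\<in>{\<alpha>}. (norm (if \<beta> = \<alpha> then v else 0))\<^sup>2)"
    by (rule infsum_cong_neutral) auto
  also have "\<dots> = (norm v)\<^sup>2" by simp
  finally show "l2norm (\<lambda>\<beta>::'d \<Rightarrow> nat. if \<beta> = \<alpha> then v else 0) = norm v"
    unfolding l2norm_def by simp
qed

lemma l2_ge_point:
  assumes "in_l2 y"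
  shows "norm (y \<gamma>) \<le> l2norm y"
proof -
  have "(\<Sum>\<beta>\<in>{\<gamma>}. (norm (y \<beta>))\<^sup>2) \<le> (\<Sum>\<^sub>\<infinity>\<beta>. (norm (y \<beta>))\<^sup>2)"
    using assms unfolding in_l2_def by (intro finite_sum_le_infsum) auto
  then show ?thesis unfolding l2norm_def by (simp add: real_le_rsqrt)
qed

lemma norm_axis_c: "norm (axis k (1::complex) :: complex^'n) = 1"
proof -
  have "(\<Sum>i\<in>UNIV. (norm (axis k (1::complex) $ i))\<^sup>2) = (\<Sum>i\<in>UNIV. if i = k then 1 else (0::real))"
    by (rule sum.cong) (auto simp: axis_def)
  then show ?thesis by (simp add: norm_vec_def L2_set_def)
qed

lemma weight_le1:
  fixes A :: "'d \<Rightarrow> ('d \<Rightarrow> nat) \<Rightarrow> complex^'n^'n"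
  assumes "contractive_multishift A" and diag: "\<And>j \<alpha>. is_diag_matrix (A j \<alpha>)"
  shows "norm (A j \<alpha> $ k $ k) \<le> 1"
proof -
  define x where "x = (\<lambda>\<beta>::'d \<Rightarrow> nat. if \<beta> = \<alpha> then axis k (1::complex) else 0)"
  have xl2: "in_l2 x" and xn: "l2norm x = 1" using single_l2[where v="axis k (1::complex)" and \<alpha>=\<alpha>] norm_axis_c[of k]
    by (simp_all add: x_def)
  have c: "in_l2 (mshift A j x)" "l2norm (mshift A j x) \<le> l2norm x"
    using assms(1) xl2 unfolding contractive_multishift_def by blast+
  have "(add_unit \<alpha> j)(j := add_unit \<alpha> j j - 1) = \<alpha>" by (simp add: add_unit_def)
  then have "mshift A j x (add_unit \<alpha> j) = A j \<alpha> *v axis k 1"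
    by (simp add: mshift_def x_def add_unit_def)
  then have "mshift A j x (add_unit \<alpha> j) $ k = A j \<alpha> $ k $ k"
    by (simp add: diag_mv[OF diag])
  moreover have "norm (mshift A j x (add_unit \<alpha> j) $ k) \<le> norm (mshift A j x (add_unit \<alpha> j))"
    by (rule Finite_Cartesian_Product.norm_nth_le)
  ultimately have "norm (A j \<alpha> $ k $ k) \<le> norm (mshift A j x (add_unit \<alpha> j))" by simp
  also have "\<dots> \<le> l2norm (mshift A j x)" by (rule l2_ge_point[OF c(1)])
  also have "\<dots> \<le> 1" using c(2) xn by simp
  finally show ?thesis .
qed

lemma norm_sq_vec: "(norm (v :: complex^'n))\<^sup>2 = (\<Sum>k\<in>UNIV. (cmod (v $ k))\<^sup>2)"
  by (simp add: norm_vec_def L2_set_def sum_nonneg)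



theorem corollary3p5:
  fixes A :: "'d::{finite,linorder} \<Rightarrow> ('d \<Rightarrow> nat) \<Rightarrow> complex^'n^'n"
  assumes "commuting_multishift_weights A"
    and "contractive_multishift A"
    and "\<And>j \<alpha>. is_diag_matrix (A j \<alpha>)"
    and "\<And>j \<alpha>. invertible (A j \<alpha>)"
  shows "\<forall>a x. is_poly_coeffs a \<longrightarrow> in_l2 x \<longrightarrow>
           l2norm (poly_of_mshift a A x)
             \<le> (SUP z\<in>polydisc. norm (poly_eval a z)) * l2norm x"
proof (intro allI impI)
  fix a :: "('d \<Rightarrow> nat) \<Rightarrow> complex" and x :: "('d \<Rightarrow> nat) \<Rightarrow> complex^'n"
  assume pa: "is_poly_coeffs a" and xl: "in_l2 x"
  define S where "S = (SUP z\<in>polydisc. norm (poly_eval a z))"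
  have fa: "finite {\<beta>. a \<beta> \<noteq> 0}" using pa by (simp add: is_poly_coeffs_def)
  have tor: "norm (poly_eval a \<omega>) \<le> S" if "\<And>j. norm (\<omega> j) = 1" for \<omega>
    unfolding S_def by (rule torus_bound) (use that in auto)
  have S0: "0 \<le> S" unfolding S_def by (rule S_nonneg)
  define I where "I = (\<Sum>\<^sub>\<infinity>\<alpha>. (norm (x \<alpha>))\<^sup>2)"
  have I0: "0 \<le> I" unfolding I_def by (rule infsum_nonneg) simp
  define P where "P = poly_of_mshift a A x"
  define c where "c k = cw (Wk A k)" for k
  have cm: "commw (Wk A k)" for k by (rule commw_Wk[OF assms(1) assms(3)])
  have cstep: "c k (add_unit \<alpha> j) = Wk A k j \<alpha> * c k \<alpha>" for k \<alpha> j
    unfolding c_def by (rule cw_add_unit[OF cm])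
  have cnz: "c k \<alpha> \<noteq> 0" for k \<alpha>
    unfolding c_def by (rule cw_nonzero) (simp add: Wk_def diag_inv_nz[OF assms(3) assms(4)])
  have canti: "norm (c k \<gamma>) \<le> norm (c k \<alpha>)" if "\<alpha> \<le> \<gamma>" for k \<alpha> \<gamma>
    unfolding c_def by (rule cw_anti[OF cm _ that]) (simp add: Wk_def weight_le1[OF assms(2) assms(3)])
  have Pk: "P \<gamma> $ k = c k \<gamma> * conv a (\<lambda>\<alpha>. x \<alpha> $ k / c k \<alpha>) \<gamma>" for \<gamma> k
    unfolding P_def by (rule poly_comp[OF assms(3) cstep cnz])
  have fin: "(\<Sum>\<gamma>\<in>G. (norm (P \<gamma>))\<^sup>2) \<le> S\<^sup>2 * I" if fG: "finite G" for G
  proof -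
    define M where "M = Max ((\<lambda>(\<gamma>, j). \<gamma> j) ` (G \<times> (UNIV :: 'd set)))"
    have fGU: "finite ((\<lambda>(\<gamma>, j). \<gamma> j) ` (G \<times> (UNIV :: 'd set)))" using fG by simp
    define B where "B = {\<gamma> :: 'd \<Rightarrow> nat. \<forall>j. \<gamma> j \<le> M}"
    have "B \<subseteq> boxN (Suc M)" by (auto simp: B_def boxN_def le_imp_less_Suc)
    then have fB: "finite B" using finite_boxN finite_subset by blast
    have GB: "G \<subseteq> B"
    proof
      fix \<gamma> assume g: "\<gamma> \<in> G"
      have "\<gamma> j \<le> M" for j unfolding M_def by (rule Max_ge[OF fGU]) (use g in force)
      then show "\<gamma> \<in> B" by (simp add: B_def)
    qed
    have down: "\<alpha> \<in> B" if "\<gamma> \<in> B" "\<alpha> \<le> \<gamma>" for \<alpha> \<gamma>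
      using that by (auto simp: B_def le_fun_def intro: order_trans)
    have per_k: "(\<Sum>\<gamma>\<in>B. (cmod (P \<gamma> $ k))\<^sup>2) \<le> S\<^sup>2 * (\<Sum>\<gamma>\<in>B. (cmod (x \<gamma> $ k))\<^sup>2)" for k
    proof -
      define y where "y = (\<lambda>\<alpha>. x \<alpha> $ k / c k \<alpha>)"
      define \<nu> where "\<nu> \<gamma> = (if \<gamma> \<in> B then (cmod (c k \<gamma>))\<^sup>2 else 0)" for \<gamma>
      have Pnu: "{\<gamma>. 0 < \<nu> \<gamma>} = B" using cnz by (auto simp: \<nu>_def)
      have nn: "0 \<le> \<nu> \<gamma>" for \<gamma> by (simp add: \<nu>_def)
      have anti: "\<nu> \<gamma> \<le> \<nu> \<alpha>" if "\<alpha> \<le> \<gamma>" for \<alpha> \<gamma>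
      proof (cases "\<gamma> \<in> B")
        case True
        then have "\<alpha> \<in> B" using down that by blast
        then show ?thesis using True canti[OF that, of k]
          by (simp add: \<nu>_def power_mono)
      qed (simp add: \<nu>_def)
      have W: "(\<Sum>\<gamma>\<in>{\<gamma>. 0 < \<nu> \<gamma>}. \<nu> \<gamma> * (cmod (conv a y \<gamma>))\<^sup>2)
          \<le> S\<^sup>2 * (\<Sum>\<gamma>\<in>{\<gamma>. 0 < \<nu> \<gamma>}. \<nu> \<gamma> * (cmod (y \<gamma>))\<^sup>2)"
        by (rule vN_weighted_aux[OF fa tor refl]) (use nn anti fB Pnu in auto)
      have e1: "(\<Sum>\<gamma>\<in>{\<gamma>. 0 < \<nu> \<gamma>}. \<nu> \<gamma> * (cmod (conv a y \<gamma>))\<^sup>2) = (\<Sum>\<gamma>\<in>B. (cmod (P \<gamma> $ k))\<^sup>2)"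
        unfolding Pnu by (rule sum.cong) (simp_all add: \<nu>_def Pk y_def norm_mult power_mult_distrib)
      have e2: "(\<Sum>\<gamma>\<in>{\<gamma>. 0 < \<nu> \<gamma>}. \<nu> \<gamma> * (cmod (y \<gamma>))\<^sup>2) = (\<Sum>\<gamma>\<in>B. (cmod (x \<gamma> $ k))\<^sup>2)"
        unfolding Pnu by (rule sum.cong) (simp_all add: \<nu>_def y_def norm_divide power_divide cnz)
      show ?thesis using W unfolding e1 e2 .
    qed
    have "(\<Sum>\<gamma>\<in>G. (norm (P \<gamma>))\<^sup>2) \<le> (\<Sum>\<gamma>\<in>B. (norm (P \<gamma>))\<^sup>2)"
      by (rule sum_mono2[OF fB GB]) simp
    also have "\<dots> = (\<Sum>k\<in>UNIV. \<Sum>\<gamma>\<in>B. (cmod (P \<gamma> $ k))\<^sup>2)"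
      by (simp add: norm_sq_vec sum.swap[of _ B])
    also have "\<dots> \<le> (\<Sum>k\<in>UNIV. S\<^sup>2 * (\<Sum>\<gamma>\<in>B. (cmod (x \<gamma> $ k))\<^sup>2))"
      by (rule sum_mono) (rule per_k)
    also have "\<dots> = S\<^sup>2 * (\<Sum>\<gamma>\<in>B. (norm (x \<gamma>))\<^sup>2)"
      by (simp add: norm_sq_vec sum.swap[of _ B] sum_distrib_left)
    also have "\<dots> \<le> S\<^sup>2 * I"
    proof (rule mult_left_mono)
      show "(\<Sum>\<gamma>\<in>B. (norm (x \<gamma>))\<^sup>2) \<le> I"
        unfolding I_def using xl fB unfolding in_l2_def by (intro finite_sum_le_infsum) auto
    qed simp
    finally show ?thesis .
  qed
  have infle: "(\<Sum>\<^sub>\<infinity>\<gamma>. (norm (P \<gamma>))\<^sup>2) \<le> S\<^sup>2 * I"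
  proof (cases "(\<lambda>\<gamma>. (norm (P \<gamma>))\<^sup>2) summable_on UNIV")
    case True
    then show ?thesis by (rule infsum_le_finite_sums) (use fin in auto)
  next
    case False
    then show ?thesis using I0 by (simp add: infsum_not_exists)
  qed
  have "l2norm P = sqrt (\<Sum>\<^sub>\<infinity>\<gamma>. (norm (P \<gamma>))\<^sup>2)" by (simp add: l2norm_def)
  also have "\<dots> \<le> sqrt (S\<^sup>2 * I)" using infle by simp
  also have "\<dots> = S * l2norm x" using S0 by (simp add: real_sqrt_mult l2norm_def I_def)
  finally show "l2norm (poly_of_mshift a A x) \<le> (SUP z\<in>polydisc. norm (poly_eval a z)) * l2norm x"
    by (simp add: P_def S_def)
qed

end
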